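(* Let $p,q\in(0,1/2)$ with $\frac{\log p}{\log q}\notin\mathbb Q$. Then for any $r>0$ and any finite word $\mathbf i\in I^*$, $$\lim_{t\to+\infty}\Delta_{[0,r]}\big(t(K_{pq}-S_{\mathbf i}(0))\big)=\lim_{t\to+\infty}\Delta_{[-r,0]}\big(t(K_{pq}-S_{\mathbf i}(1))\big)=0.$$
   Context: For $p,q\in(0,1/2)$ let $S_1(x)=px$, $S_2(x)=qx$, $S_3(x)=px+1-p$, $S_4(x)=qx+1-q$, and let $K_{pq}$ be the attractor of $\{S_1,S_2,S_3,S_4\}$ (the unique nonempty compact $K\subset\mathbb R$ with $K=\bigcup_{i=1}^4S_i(K)$). $I=\{1,2,3,4\}$, $I^*=\bigcup_{n\ge1}I^n$ is the set of finite words, and for $\mathbf i=i_1\dots i_n$, $S_{\mathbf i}=S_{i_1}\circ\cdots\circ S_{i_n}$. For a set $X\subset\mathbb R$ and $s\in\mathbb R$, $X-s=\{x-s:x\in X\}$ and $tX=\{tx:x\in X\}$. For $a<b$ and compact $X\subset\mathbb R$, $\Delta_{[a,b]}(X)=d_H(X\cap[a,b],[a,b])$, where $d_H$ is the Hausdorff distance. *)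

theory Defs
  imports "HOL-Analysis.Analysis"
begin

text \<open>The four similarity maps S_1,...,S_4 (indices outside 1..4 are irrelevant).\<close>
definition Smap :: "real \<Rightarrow> real \<Rightarrow> nat \<Rightarrow> real \<Rightarrow> real" where
  "Smap p q i x =
     (if i = 1 then p * x
      else if i = 2 then q * x
      else if i = 3 then p * x + 1 - p
      else q * x + 1 - q)"

definition Kpq :: "real \<Rightarrow> real \<Rightarrow> real set" where
  "Kpq p q = (THE K. K \<noteq> {} \<and> compact K \<and> K = (\<Union>i\<in>{1..4}. Smap p q i ` K))"

definition words :: "nat list set" where
  "words = {w. w \<noteq> [] \<and> set w \<subseteq> {1..4}}"

definition Sword :: "real \<Rightarrow> real \<Rightarrow> nat list \<Rightarrow> real \<Rightarrow> real" where
  "Sword p q w = foldr (\<lambda>i f. Smap p q i \<circ> f) w id"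

definition translate_set :: "real set \<Rightarrow> real \<Rightarrow> real set" where
  "translate_set X s = (\<lambda>x. x - s) ` X"

definition scale_set :: "real \<Rightarrow> real set \<Rightarrow> real set" where
  "scale_set t X = (\<lambda>x. t * x) ` X"

definition hausdorff_dist :: "real set \<Rightarrow> real set \<Rightarrow> real" where
  "hausdorff_dist A B = max (SUP x\<in>A. infdist x B) (SUP y\<in>B. infdist y A)"

definition Delta :: "real \<Rightarrow> real \<Rightarrow> real set \<Rightarrow> real" where
  "Delta a b X = hausdorff_dist (X \<inter> {a..b}) {a..b}"

end

theory Submission
  imports Defs
begin

lemma cover:
  fixes \<alpha> \<beta> \<eta> :: real
  assumes ap: "\<alpha> > 0" and bp: "\<beta> > 0" and irr: "\<alpha>/\<beta> \<notin> \<rat>" and ep: "\<eta> > 0"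
  shows "\<exists>M. \<forall>u\<ge>M. \<exists>a b::nat. u \<le> real a*\<alpha> + real b*\<beta> \<and> real a*\<alpha> + real b*\<beta> \<le> u + \<eta>"
proof -
  define \<theta> where "\<theta> = \<alpha>/\<beta>"
  have tp: "\<theta> > 0" using ap bp by (simp add: \<theta>_def)
  obtain n::nat where n0: "n > 0" and nf: "\<bar>frac (real n * \<theta>) - 0\<bar> < \<eta>/\<beta>"
    using Kronecker_approx_1_explicit[of \<theta> 0 "\<eta>/\<beta>"] irr ep bp by (auto simp: \<theta>_def)
  have frp: "frac (real n * \<theta>) > 0"
  proof (rule ccontr)
    assume "\<not> frac (real n * \<theta>) > 0"
    then have "frac (real n * \<theta>) = 0" using frac_ge_0[of "real n * \<theta>"] by linarith
    then have "real n * \<theta> \<in> \<int>" by (simp add: frac_eq_0_iff)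
    then obtain z where "real n * \<theta> = of_int z" by (auto elim: Ints_cases)
    then have "\<theta> = of_int z / real n" using n0 by (simp add: field_simps)
    then have "\<theta> \<in> \<rat>" by simp
    then show False using irr by (simp add: \<theta>_def)
  qed
  define f where "f = nat \<lfloor>real n * \<theta>\<rfloor>"
  have fe: "real f = real_of_int \<lfloor>real n * \<theta>\<rfloor>" using tp by (simp add: f_def)
  define g where "g = real n * \<alpha> - real f * \<beta>"
  have "g = \<beta> * frac (real n * \<theta>)"
    using bp by (simp add: g_def frac_def fe \<theta>_def field_simps)
  then have g0: "g > 0" and g1: "g < \<eta>" using frp nf bp by (auto simp: field_simps)
  define J where "J = nat \<lceil>\<alpha>/g\<rceil>"
  define B where "B = real J * real f * \<beta>"
  show ?thesis
  proof (rule exI[of _ B], intro allI impI)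
    fix u assume uB: "u \<ge> B"
    define k where "k = nat \<lfloor>(u-B)/\<alpha>\<rfloor>"
    have ke: "real k = real_of_int \<lfloor>(u-B)/\<alpha>\<rfloor>" using uB ap by (simp add: k_def)
    define v where "v = u - B - real k * \<alpha>"
    have "real k \<le> (u-B)/\<alpha>" "(u-B)/\<alpha> < real k + 1" using ke by linarith+
    then have v0: "0 \<le> v" and v1: "v < \<alpha>" using ap by (auto simp: v_def field_simps)
    define j where "j = nat \<lceil>v/g\<rceil>"
    have je: "real j = real_of_int \<lceil>v/g\<rceil>" using v0 g0 by (simp add: j_def)
    have "v/g \<le> real j" "real j < v/g + 1" using je by linarith+
    then have j1: "v \<le> real j * g" and j2: "real j * g < v + g" using g0 by (auto simp: field_simps)
    have "\<lceil>v/g\<rceil> \<le> \<lceil>\<alpha>/g\<rceil>" using v1 g0 by (intro ceiling_mono) (simp add: divide_right_mono)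
    then have jJ: "j \<le> J" unfolding j_def J_def by (rule nat_mono)
    define a where "a = j*n + k"
    define b where "b = (J - j) * f"
    have val: "real a * \<alpha> + real b * \<beta> = u + (real j * g - v)"
      using jJ by (simp add: a_def b_def v_def B_def g_def of_nat_diff algebra_simps)
    show "\<exists>a b::nat. u \<le> real a*\<alpha> + real b*\<beta> \<and> real a*\<alpha> + real b*\<beta> \<le> u + \<eta>"
      using val j1 j2 g1 by (intro exI[of _ a] exI[of _ b]) auto
  qed
qed

lemma exp_pq:
  fixes p q :: real and a b :: nat
  assumes "p > 0" "q > 0"
  shows "exp (- (real a * (- ln p) + real b * (- ln q))) = p^a * q^b"
proof -
  have "exp (- (real a * (- ln p) + real b * (- ln q))) = exp (real a * ln p) * exp (real b * ln q)"
    by (simp add: exp_add[symmetric])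
  also have "\<dots> = p^a * q^b" using assms by (simp add: exp_of_nat_mult)
  finally show ?thesis .
qed

lemma dense_pts:
  fixes p q c r \<epsilon> :: real
  assumes p0: "0<p" and p1: "p<1" and q0: "0<q" and q1: "q<1" and irr: "ln p/ln q \<notin> \<rat>"
    and c0: "c>0" and r0: "r>0" and e0: "\<epsilon>>0"
  shows "eventually (\<lambda>t. \<forall>y\<in>{0<..r}. \<exists>a b::nat. y - \<epsilon> \<le> t*c*(p^a*q^b) \<and> t*c*(p^a*q^b) \<le> y) at_top"
proof -
  define \<alpha> where "\<alpha> = - ln p"
  define \<beta> where "\<beta> = - ln q"
  have ap: "\<alpha> > 0" using p0 p1 by (simp add: \<alpha>_def)
  have bp: "\<beta> > 0" using q0 q1 by (simp add: \<beta>_def)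
  have "\<alpha>/\<beta> = ln p / ln q" by (simp add: \<alpha>_def \<beta>_def)
  with irr have irr': "\<alpha>/\<beta> \<notin> \<rat>" by simp
  define \<eta> where "\<eta> = \<epsilon>/r"
  have eta0: "\<eta> > 0" using e0 r0 by (simp add: \<eta>_def)
  obtain M where M: "\<And>u. u \<ge> M \<Longrightarrow> \<exists>a b::nat. u \<le> real a*\<alpha> + real b*\<beta> \<and> real a*\<alpha> + real b*\<beta> \<le> u + \<eta>"
    using cover[OF ap bp irr' eta0] by blast
  show ?thesis
    unfolding eventually_at_top_linorder
  proof (rule exI[of _ "r * exp M / c"], intro allI impI ballI)
    fix t y assume tN: "t \<ge> r * exp M / c" and y: "y \<in> {0<..r}"
    have y0: "y > 0" and yr: "y \<le> r" using y by auto
    have "r * exp M / c > 0" using r0 c0 by simp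
    then have t0: "t > 0" using tN by linarith
    have "exp M \<le> t * c / r" using tN c0 r0 by (simp add: field_simps)
    also have "\<dots> \<le> t * c / y" using t0 c0 y0 yr by (intro divide_left_mono) auto
    finally have "M \<le> ln (t*c/y)" using t0 c0 y0 by (simp add: ln_ge_iff)
    then obtain a b :: nat where l1: "ln (t*c/y) \<le> real a*\<alpha> + real b*\<beta>"
      and l2: "real a*\<alpha> + real b*\<beta> \<le> ln (t*c/y) + \<eta>" using M by blast
    define l where "l = real a*\<alpha> + real b*\<beta>"
    have pe: "p^a*q^b = exp (-l)" using exp_pq[OF p0 q0, of a b] by (simp add: l_def \<alpha>_def \<beta>_def)
    have tcy: "t*c*exp(- ln (t*c/y)) = y" using t0 c0 y0 by (simp add: exp_minus)
    have "t*c*exp(-l) \<le> t*c*exp(- ln (t*c/y))" using l1 t0 c0 by (simp add: l_def)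
    then have up: "t*c*(p^a*q^b) \<le> y" using pe tcy by simp
    have "t*c*exp(-l) \<ge> t*c*exp(- ln (t*c/y) - \<eta>)" using l2 t0 c0 by (simp add: l_def)
    also have "t*c*exp(- ln (t*c/y) - \<eta>) = y * exp (-\<eta>)"
      using tcy by (simp add: exp_diff exp_minus field_simps)
    finally have lo1: "t*c*(p^a*q^b) \<ge> y * exp (-\<eta>)" using pe by simp
    have "exp (-\<eta>) \<ge> 1 - \<eta>" using exp_ge_add_one_self[of "-\<eta>"] by simp
    then have "y * exp (-\<eta>) \<ge> y * (1 - \<eta>)" using y0 by (intro mult_left_mono) auto
    moreover have "y * \<eta> \<le> r * \<eta>" using yr eta0 by (intro mult_right_mono) auto
    moreover have "r * \<eta> = \<epsilon>" using r0 by (simp add: \<eta>_def)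
    ultimately have "y * exp (-\<eta>) \<ge> y - \<epsilon>" by (simp add: algebra_simps)
    with lo1 up show "\<exists>a b::nat. y - \<epsilon> \<le> t*c*(p^a*q^b) \<and> t*c*(p^a*q^b) \<le> y" by (intro exI[of _ a] exI[of _ b]) auto
  qed
qed
lemma Smap_affine: "Smap p q i x = (if i = 1 \<or> i = 3 then p else q) * x + Smap p q i 0"
  by (simp add: Smap_def)

lemma Smap_fun: "Smap p q i = (\<lambda>x. (if i = 1 \<or> i = 3 then p else q) * x + Smap p q i 0)"
  using Smap_affine by blast

lemma Smap_cont: "continuous_on S (Smap p q i)"
  by (subst Smap_fun) (intro continuous_intros)

lemma Sword_Nil[simp]: "Sword p q [] x = x"
  by (simp add: Sword_def)

lemma Sword_Cons[simp]: "Sword p q (i # w) x = Smap p q i (Sword p q w x)"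
  by (simp add: Sword_def)

lemma Sword_affine:
  assumes "0 < p" "p \<le> 1/2" "0 < q" "q \<le> 1/2"
  shows "\<exists>c. 0 < c \<and> c \<le> (1/2)^length w \<and> (\<forall>x. Sword p q w x = c*x + Sword p q w 0)"
proof (induction w)
  case Nil then show ?case by (intro exI[of _ 1]) auto
next
  case (Cons i w)
  then obtain c where c: "0 < c" "c \<le> (1/2)^length w" "\<forall>x. Sword p q w x = c*x + Sword p q w 0" by blast
  define \<rho> where "\<rho> = (if i = 1 \<or> i = 3 then p else q)"
  have r: "0 < \<rho>" "\<rho> \<le> 1/2" using assms by (auto simp: \<rho>_def)
  have e1: "Sword p q (i#w) x = \<rho>*(c*x + Sword p q w 0) + Smap p q i 0" for x
    using c(3)[rule_format, of x] by (simp add: Smap_def \<rho>_def)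
  have e0: "Sword p q (i#w) 0 = \<rho>*(Sword p q w 0) + Smap p q i 0"
    by (simp add: Smap_def \<rho>_def)
  have "\<forall>x. Sword p q (i#w) x = (\<rho>*c)*x + Sword p q (i#w) 0"
  proof
    fix x show "Sword p q (i#w) x = (\<rho>*c)*x + Sword p q (i#w) 0"
      unfolding e1 e0 by (simp add: algebra_simps)
  qed
  moreover have "\<rho>*c \<le> (1/2)^length (i#w)"
    using mult_mono[OF r(2) c(2)] r c(1) by simp
  moreover have "0 < \<rho>*c" using r c(1) by simp
  ultimately show ?case by blast
qed

lemma Smap_01: "0 < p \<Longrightarrow> p < 1 \<Longrightarrow> 0 < q \<Longrightarrow> q < 1 \<Longrightarrow> x \<in> {0..1} \<Longrightarrow> Smap p q i x \<in> {0..1}"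
proof -
  assume a: "0 < p" "p < 1" "0 < q" "q < 1" "x \<in> {0..1}"
  have "0 \<le> p*x" "p*x \<le> p" "0 \<le> q*x" "q*x \<le> q"
    using a by (auto intro: mult_left_le_one_le mult_right_le_one_le)
  then show ?thesis unfolding Smap_def using a by (smt (verit) atLeastAtMost_iff)
qed


lemma Sword_01: "0 < p \<Longrightarrow> p < 1 \<Longrightarrow> 0 < q \<Longrightarrow> q < 1 \<Longrightarrow> x \<in> {0..1} \<Longrightarrow> Sword p q w x \<in> {0..1}"
  by (induction w) (auto simp del: atLeastAtMost_iff intro: Smap_01)

definition Orb :: "real \<Rightarrow> real \<Rightarrow> real set" where
  "Orb p q = {Sword p q w 0 | w. set w \<subseteq> {1..4}}"

definition IsAtt :: "real \<Rightarrow> real \<Rightarrow> real set \<Rightarrow> bool" where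
  "IsAtt p q K \<longleftrightarrow> K \<noteq> {} \<and> compact K \<and> K = (\<Union>i\<in>{1..4}. Smap p q i ` K)"

lemma closed_iter:
  assumes "closed K" "f ` K \<subseteq> K" "x \<in> K" "(\<lambda>n. (f^^n) x) \<longlonglongrightarrow> l"
  shows "l \<in> K"
proof -
  have "\<forall>n. (f^^n) x \<in> K"
  proof
    fix n show "(f^^n) x \<in> K"
    proof (induction n)
      case 0 show ?case using assms(3) by simp
    next
      case (Suc n) then show ?case using assms(2) by (simp add: image_subset_iff)
    qed
  qed
  then show ?thesis using closed_sequentially[OF assms(1) _ assms(4)] by blast
qed

lemma iter1: "(Smap p q 1 ^^ n) x = p^n * x"
  by (induction n) (auto simp: Smap_def)

lemma iter3: "(Smap p q 3 ^^ n) x = 1 - p^n * (1 - x)"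
proof (induction n)
  case 0 then show ?case by simp
next
  case (Suc n)
  have h: "(Smap p q 3 ^^ Suc n) x = Smap p q 3 (1 - p^n*(1-x))" using Suc by simp
  have eq: "Smap p q 3 (1 - p^n*(1-x)) = 1 - p^(Suc n)*(1-x)" by (simp add: Smap_def algebra_simps)
  show ?case using h eq by (rule trans)
qed

lemma IsAtt_sub: "IsAtt p q K \<Longrightarrow> i \<in> {1..4} \<Longrightarrow> Smap p q i ` K \<subseteq> K"
  unfolding IsAtt_def by blast

lemma IsAtt_0_1:
  assumes "IsAtt p q K" "0 < p" "p < 1"
  shows "0 \<in> K" "1 \<in> K"
proof -
  obtain x where x: "x \<in> K" using assms(1) by (auto simp: IsAtt_def)
  have cl: "closed K" using assms(1) by (auto simp: IsAtt_def compact_imp_closed)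
  have pn: "(\<lambda>n. p^n) \<longlonglongrightarrow> 0" using assms by (intro LIMSEQ_power_zero) auto
  have s1: "Smap p q 1 ` K \<subseteq> K" by (rule IsAtt_sub[OF assms(1)]) simp
  have s3: "Smap p q 3 ` K \<subseteq> K" by (rule IsAtt_sub[OF assms(1)]) simp
  have "(\<lambda>n. p^n * x) \<longlonglongrightarrow> 0 * x" by (intro tendsto_intros pn)
  then have "(\<lambda>n. (Smap p q 1 ^^ n) x) \<longlonglongrightarrow> 0" unfolding iter1 by simp
  then show "0 \<in> K" by (rule closed_iter[OF cl s1 x])
  have "(\<lambda>n. 1 - p^n * (1 - x)) \<longlonglongrightarrow> 1 - 0 * (1 - x)" by (intro tendsto_intros pn)
  then have "(\<lambda>n. (Smap p q 3 ^^ n) x) \<longlonglongrightarrow> 1" unfolding iter3 by simp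
  then show "1 \<in> K" by (rule closed_iter[OF cl s3 x])
qed

lemma IsAtt_Sword: "IsAtt p q K \<Longrightarrow> set w \<subseteq> {1..4} \<Longrightarrow> x \<in> K \<Longrightarrow> Sword p q w x \<in> K"
proof (induction w)
  case Nil then show ?case by simp
next
  case (Cons i w)
  then have "Sword p q w x \<in> K" "i \<in> {1..4}" by auto
  then have "Smap p q i (Sword p q w x) \<in> Smap p q i ` K" by blast
  then show ?case using IsAtt_sub[OF Cons.prems(1) \<open>i \<in> {1..4}\<close>] by auto
qed

lemma IsAtt_unique:
  assumes A: "IsAtt p q K" and p: "0 < p" "p < 1/2" and q: "0 < q" "q < 1/2"
  shows "K = closure (Orb p q)"
proof
  have "Orb p q \<subseteq> K" using IsAtt_Sword[OF A _ IsAtt_0_1(1)[OF A]] p by (auto simp: Orb_def)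
  then show "closure (Orb p q) \<subseteq> K"
    using A by (intro closure_minimal) (auto simp: IsAtt_def compact_imp_closed)
next
  have rep: "\<forall>x\<in>K. \<exists>w y. length w = n \<and> set w \<subseteq> {1..4} \<and> y \<in> K \<and> x = Sword p q w y" for n
  proof (induction n)
    case 0 then show ?case by (intro ballI exI[of _ "[]"]) auto
  next
    case (Suc n)
    show ?case
    proof
      fix x assume "x \<in> K"
      then obtain i y where i: "i \<in> {1..4}" "y \<in> K" "x = Smap p q i y"
        using A unfolding IsAtt_def by blast
      then obtain w z where "length w = n" "set w \<subseteq> {1..4}" "z \<in> K" "y = Sword p q w z"
        using Suc by blast
      then show "\<exists>w y. length w = Suc n \<and> set w \<subseteq> {1..4} \<and> y \<in> K \<and> x = Sword p q w y"
        using i by (intro exI[of _ "i#w"] exI[of _ z]) auto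
    qed
  qed
  have "bounded K" using A by (simp add: IsAtt_def compact_imp_bounded)
  then obtain B where B: "\<forall>x\<in>K. norm x \<le> B" by (auto simp: bounded_iff)
  show "K \<subseteq> closure (Orb p q)"
  proof
    fix x assume x: "x \<in> K"
    have B0: "B \<ge> 0" using B x by (meson norm_ge_zero order_trans)
    show "x \<in> closure (Orb p q)"
      unfolding closure_approachable
    proof (intro allI impI)
      fix e :: real assume e: "e > 0"
      obtain n where n: "(1/2::real)^n < e/(B+1)" using real_arch_pow_inv[of "e/(B+1)" "1/2"] e B0 by auto
      obtain w y where w: "length w = n" "set w \<subseteq> {1..4}" "y \<in> K" "x = Sword p q w y"
        using rep x by blast
      obtain c where c: "0 < c" "c \<le> (1/2)^length w" "\<forall>x. Sword p q w x = c*x + Sword p q w 0"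
        using Sword_affine[of p q w] p q by (meson less_imp_le)
      have "dist (Sword p q w 0) x = c * \<bar>y\<bar>" using c(1) c(3)[rule_format, of y] w(4) by (simp add: dist_real_def abs_mult)
      also have "\<dots> \<le> (1/2)^n * B" using c(1,2) w B by (intro mult_mono) auto
      also have "\<dots> \<le> (1/2)^n * (B+1)" by simp
      also have "\<dots> < e" using n B0 by (simp add: field_simps)
      finally show "\<exists>y\<in>Orb p q. dist y x < e" using w by (auto simp: Orb_def)
    qed
  qed
qed

lemma IsAtt_exists:
  assumes p: "0 < p" "p < 1/2" and q: "0 < q" "q < 1/2"
  shows "IsAtt p q (closure (Orb p q))"
proof -
  let ?C = "closure (Orb p q)"
  have O01: "Orb p q \<subseteq> {0..1}" using Sword_01[of p q 0] p q by (auto simp: Orb_def)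
  have "0 \<in> Orb p q" unfolding Orb_def by (rule CollectI, rule exI[of _ "[]"]) auto
  then have ne: "?C \<noteq> {}" by auto
  have cp: "compact ?C"
  proof -
    have "bounded (Orb p q)" using O01 bounded_subset[OF compact_imp_bounded[OF compact_Icc]] by blast
    then show ?thesis unfolding compact_eq_bounded_closed by (auto intro: bounded_closure)
  qed
  have sub: "Smap p q i ` ?C \<subseteq> ?C" if i: "i \<in> {1..4}" for i
  proof (rule image_closure_subset[OF Smap_cont closed_closure])
    show "Smap p q i ` Orb p q \<subseteq> ?C"
    proof
      fix z assume "z \<in> Smap p q i ` Orb p q"
      then obtain w where "set w \<subseteq> {1..4}" "z = Sword p q (i#w) 0" by (auto simp: Orb_def)
      then have "z \<in> Orb p q" using i unfolding Orb_def by (intro CollectI exI[of _ "i#w"]) auto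
      then show "z \<in> ?C" using closure_subset by blast
    qed
  qed
  have sup: "?C \<subseteq> (\<Union>i\<in>{1..4}. Smap p q i ` ?C)"
  proof (rule closure_minimal)
    show "closed (\<Union>i\<in>{1..4}. Smap p q i ` ?C)"
      by (intro compact_imp_closed compact_UN finite_atLeastAtMost compact_continuous_image Smap_cont cp) 
    show "Orb p q \<subseteq> (\<Union>i\<in>{1..4}. Smap p q i ` ?C)"
    proof
      fix z assume "z \<in> Orb p q"
      then obtain w where w: "set w \<subseteq> {1..4}" "z = Sword p q w 0" by (auto simp: Orb_def)
      show "z \<in> (\<Union>i\<in>{1..4}. Smap p q i ` ?C)"
      proof (cases w)
        case Nil
        then have "z = Smap p q 1 0" using w by (simp add: Smap_def)
        then show ?thesis using \<open>0 \<in> Orb p q\<close> closure_subset by fastforce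
      next
        case (Cons i w')
        then have "Sword p q w' 0 \<in> ?C" using w closure_subset unfolding Orb_def by fastforce
        then show ?thesis using w Cons by auto
      qed
    qed
  qed
  show ?thesis unfolding IsAtt_def using ne cp sub sup by blast
qed

lemma Kpq_IsAtt:
  assumes p: "0 < p" "p < 1/2" and q: "0 < q" "q < 1/2"
  shows "IsAtt p q (Kpq p q)"
proof -
  have "\<exists>!K. IsAtt p q K" using IsAtt_exists[OF p q] IsAtt_unique[OF _ p q] by blast
  then show ?thesis unfolding Kpq_def IsAtt_def[abs_def] by (rule theI')
qed


lemma delta_bound:
  fixes a b \<epsilon> :: real
  assumes ab: "a \<le> b" and e: "\<epsilon> \<ge> 0" and H: "\<forall>y\<in>{a..b}. \<exists>z\<in>X. a \<le> z \<and> z \<le> b \<and> \<bar>y - z\<bar> \<le> \<epsilon>"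
  shows "0 \<le> Delta a b X \<and> Delta a b X \<le> \<epsilon>"
proof -
  let ?Y = "X \<inter> {a..b}"
  have ne: "?Y \<noteq> {}" using H ab by fastforce
  have s1: "(SUP x\<in>?Y. infdist x {a..b}) = 0"
    using ne by (simp add: infdist_zero)
  have s2: "(SUP y\<in>{a..b}. infdist y ?Y) \<le> \<epsilon>"
  proof (rule cSUP_least)
    show "{a..b} \<noteq> {}" using ab by simp
    fix y assume y: "y \<in> {a..b}"
    then obtain z where z: "z \<in> X" "a \<le> z" "z \<le> b" "\<bar>y - z\<bar> \<le> \<epsilon>" using H by blast
    have "infdist y ?Y \<le> dist y z" using z by (intro infdist_le) auto
    then show "infdist y ?Y \<le> \<epsilon>" using z by (simp add: dist_real_def)
  qed
  show ?thesis unfolding Delta_def hausdorff_dist_def using s1 s2 e by auto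
qed

lemma tendsto0_crit:
  fixes f :: "real \<Rightarrow> real"
  assumes "\<And>\<epsilon>. \<epsilon> > 0 \<Longrightarrow> eventually (\<lambda>t. 0 \<le> f t \<and> f t \<le> \<epsilon>) at_top"
  shows "(f \<longlongrightarrow> 0) at_top"
proof (rule tendstoI)
  fix e :: real assume e: "e > 0"
  show "eventually (\<lambda>t. dist (f t) 0 < e) at_top"
  proof -
    have "eventually (\<lambda>t. 0 \<le> f t \<and> f t \<le> e/2) at_top" using assms[of "e/2"] e by simp
    then show ?thesis by (rule eventually_mono) (use e in \<open>auto simp: dist_real_def\<close>)
  qed
qed

lemma mem_st: "x \<in> K \<Longrightarrow> t * (x - s) \<in> scale_set t (translate_set K s)"
  unfolding scale_set_def translate_set_def by (intro imageI)

theorem corollary8: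
  fixes p q r :: real and w :: "nat list"
  assumes "0 < p" "p < 1/2" "0 < q" "q < 1/2"
    and "ln p / ln q \<notin> \<rat>"
    and "r > 0"
    and "w \<in> words"
  shows "((\<lambda>t. Delta 0 r (scale_set t (translate_set (Kpq p q) (Sword p q w 0)))) \<longlongrightarrow> 0) at_top \<and>
         ((\<lambda>t. Delta (-r) 0 (scale_set t (translate_set (Kpq p q) (Sword p q w 1)))) \<longlongrightarrow> 0) at_top"
proof -
  note pq = assms(1-4)
  define K where "K = Kpq p q"
  have A: "IsAtt p q K" using Kpq_IsAtt[OF pq] by (simp add: K_def)
  have ws: "set w \<subseteq> {1..4}" using assms(7) by (simp add: words_def)
  obtain c where c: "0 < c" "\<forall>x. Sword p q w x = c*x + Sword p q w 0"
    using Sword_affine[of p q w] pq by (meson less_imp_le)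
  have K0: "0 \<in> K" and K1: "1 \<in> K" using IsAtt_0_1[OF A] pq by auto
  have qb: "q^b \<in> K \<and> 1 - q^b \<in> K" for b :: nat
  proof (induction b)
    case 0 then show ?case using K0 K1 by simp
  next
    case (Suc b)
    have "Smap p q 2 (q^b) \<in> K" "Smap p q 4 (1 - q^b) \<in> K"
      using Suc IsAtt_sub[OF A, of 2] IsAtt_sub[OF A, of 4] by auto
    then show ?case by (simp add: Smap_def algebra_simps)
  qed
  have pts: "p^a*q^b \<in> K \<and> 1 - p^a*q^b \<in> K" for a b :: nat
  proof (induction a)
    case 0 then show ?case using qb by simp
  next
    case (Suc a)
    have "Smap p q 1 (p^a*q^b) \<in> K" "Smap p q 3 (1 - p^a*q^b) \<in> K"
      using Suc IsAtt_sub[OF A, of 1] IsAtt_sub[OF A, of 3] by auto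
    then show ?case by (simp add: Smap_def algebra_simps)
  qed
  have p1: "p < 1" "q < 1" using pq by auto
  define s0 where "s0 = Sword p q w 0"
  define s1 where "s1 = Sword p q w 1"
  have s0K: "s0 \<in> K" using IsAtt_Sword[OF A ws K0] by (simp add: s0_def)
  have s1K: "s1 \<in> K" using IsAtt_Sword[OF A ws K1] by (simp add: s1_def)
  have part1: "((\<lambda>t. Delta 0 r (scale_set t (translate_set K s0))) \<longlongrightarrow> 0) at_top"
  proof (rule tendsto0_crit)
    fix \<epsilon> :: real assume e: "\<epsilon> > 0"
    have ev: "eventually (\<lambda>t. t > 0 \<and> (\<forall>y\<in>{0<..r}. \<exists>a b::nat. y - \<epsilon> \<le> t*c*(p^a*q^b) \<and> t*c*(p^a*q^b) \<le> y)) at_top"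
      using eventually_conj[OF eventually_gt_at_top[of 0] dense_pts[OF pq(1) p1(1) pq(3) p1(2) assms(5) c(1) assms(6) e]] .
    show "eventually (\<lambda>t. 0 \<le> Delta 0 r (scale_set t (translate_set K s0)) \<and> Delta 0 r (scale_set t (translate_set K s0)) \<le> \<epsilon>) at_top"
    proof (rule eventually_mono[OF ev], rule delta_bound)
      fix t assume T: "t > 0 \<and> (\<forall>y\<in>{0<..r}. \<exists>a b::nat. y - \<epsilon> \<le> t*c*(p^a*q^b) \<and> t*c*(p^a*q^b) \<le> y)"
      show "0 \<le> r" "0 \<le> \<epsilon>" using assms(6) e by auto
      show "\<forall>y\<in>{0..r}. \<exists>z\<in>scale_set t (translate_set K s0). 0 \<le> z \<and> z \<le> r \<and> \<bar>y - z\<bar> \<le> \<epsilon>"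
      proof
        fix y assume y: "y \<in> {0..r}"
        show "\<exists>z\<in>scale_set t (translate_set K s0). 0 \<le> z \<and> z \<le> r \<and> \<bar>y - z\<bar> \<le> \<epsilon>"
        proof (cases "y = 0")
          case True
          have "t * (s0 - s0) \<in> scale_set t (translate_set K s0)" by (rule mem_st[OF s0K])
          then show ?thesis using True y e by (intro bexI[of _ 0]) auto
        next
          case False
          then have "y \<in> {0<..r}" using y by auto
          then obtain a b :: nat where ab: "y - \<epsilon> \<le> t*c*(p^a*q^b)" "t*c*(p^a*q^b) \<le> y"
            using T by blast
          have "Sword p q w (p^a*q^b) \<in> K" using IsAtt_Sword[OF A ws] pts by blast
          then have "t * (Sword p q w (p^a*q^b) - s0) \<in> scale_set t (translate_set K s0)" by (rule mem_st)
          moreover have "t * (Sword p q w (p^a*q^b) - s0) = t*c*(p^a*q^b)" using c(2)[rule_format, of "p^a*q^b"] by (simp add: s0_def)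
          moreover have "t*c*(p^a*q^b) \<ge> 0" using T c pq by simp
          ultimately show ?thesis using ab y by (intro bexI[of _ "t*c*(p^a*q^b)"]) auto
        qed
      qed
    qed
  qed
  have part2: "((\<lambda>t. Delta (-r) 0 (scale_set t (translate_set K s1))) \<longlongrightarrow> 0) at_top"
  proof (rule tendsto0_crit)
    fix \<epsilon> :: real assume e: "\<epsilon> > 0"
    have ev: "eventually (\<lambda>t. t > 0 \<and> (\<forall>y\<in>{0<..r}. \<exists>a b::nat. y - \<epsilon> \<le> t*c*(p^a*q^b) \<and> t*c*(p^a*q^b) \<le> y)) at_top"
      using eventually_conj[OF eventually_gt_at_top[of 0] dense_pts[OF pq(1) p1(1) pq(3) p1(2) assms(5) c(1) assms(6) e]] .
    show "eventually (\<lambda>t. 0 \<le> Delta (-r) 0 (scale_set t (translate_set K s1)) \<and> Delta (-r) 0 (scale_set t (translate_set K s1)) \<le> \<epsilon>) at_top"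
    proof (rule eventually_mono[OF ev], rule delta_bound)
      fix t assume T: "t > 0 \<and> (\<forall>y\<in>{0<..r}. \<exists>a b::nat. y - \<epsilon> \<le> t*c*(p^a*q^b) \<and> t*c*(p^a*q^b) \<le> y)"
      show "-r \<le> 0" "0 \<le> \<epsilon>" using assms(6) e by auto
      show "\<forall>y\<in>{-r..0}. \<exists>z\<in>scale_set t (translate_set K s1). -r \<le> z \<and> z \<le> 0 \<and> \<bar>y - z\<bar> \<le> \<epsilon>"
      proof
        fix y assume y: "y \<in> {-r..0}"
        show "\<exists>z\<in>scale_set t (translate_set K s1). -r \<le> z \<and> z \<le> 0 \<and> \<bar>y - z\<bar> \<le> \<epsilon>"
        proof (cases "y = 0")
          case True
          have "t * (s1 - s1) \<in> scale_set t (translate_set K s1)" by (rule mem_st[OF s1K])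
          then show ?thesis using True y e assms(6) by (intro bexI[of _ 0]) auto
        next
          case False
          then have "-y \<in> {0<..r}" using y by auto
          then obtain a b :: nat where ab: "-y - \<epsilon> \<le> t*c*(p^a*q^b)" "t*c*(p^a*q^b) \<le> -y"
            using T by blast
          have "Sword p q w (1 - p^a*q^b) \<in> K" using IsAtt_Sword[OF A ws] pts by blast
          then have "t * (Sword p q w (1 - p^a*q^b) - s1) \<in> scale_set t (translate_set K s1)" by (rule mem_st)
          moreover have "t * (Sword p q w (1 - p^a*q^b) - s1) = - (t*c*(p^a*q^b))"
            unfolding s1_def c(2)[rule_format, of "1 - p^a*q^b"] c(2)[rule_format, of 1] by (simp add: algebra_simps)
          moreover have "t*c*(p^a*q^b) \<ge> 0" using T c pq by simp
          ultimately show ?thesis using ab y by (intro bexI[of _ "- (t*c*(p^a*q^b))"]) auto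
        qed
      qed
    qed
  qed
  show ?thesis using part1 part2 by (simp add: K_def s0_def s1_def)
qed

end
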